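(* Let $\mathcal E$ be an exchangeability system for a noncommutative probability space $(\mathcal A,\phi)$, let $X_1,\dots,X_n\in\mathcal A$, let $\omega$ be a primitive $n$-th root of unity and $X_j^\omega=\sum_{k=1}^n\omega^kX_j^{(k)}$. If $j_1<j_2<\dots<j_m$ is a subsequence of $1,2,\dots,n$ with $m<n$, then $\tilde\phi(X_{j_1}^\omega X_{j_2}^\omega\cdots X_{j_m}^\omega)=0$.
   Context: A noncommutative probability space is a pair $(\mathcal A,\phi)$ of a complex unital algebra $\mathcal A$ and a unital linear functional $\phi$. An exchangeability system $\mathcal E$ for $(\mathcal A,\phi)$ consists of a noncommutative probability space $(\mathcal U,\tilde\phi)$ and a family $(\iota_k)_{k\in\mathbb N}$ of embeddings (injective unital algebra homomorphisms) $\iota_k:\mathcal A\to\mathcal A_k\subseteq\mathcal U$ with $\tilde\phi\circ\iota_k=\phi$; write $X^{(k)}=\iota_k(X)$. It is required that for all $X_1,\dots,X_n\in\mathcal A$, all indices $i_1,\dots,i_n\in\mathbb N$ and every bijection $\sigma$ of $\mathbb N$, $\tilde\phi(X_1^{(i_1)}\cdots X_n^{(i_n)})=\tilde\phi(X_1^{(\sigma(i_1))}\cdots X_n^{(\sigma(i_n))})$. *)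

theory Defs
  imports Complex_Main
begin

class complex_algebra_1 = ring_1 +
  fixes scaleC :: "complex \<Rightarrow> 'a \<Rightarrow> 'a" (infixr "*\<^sub>C" 75)
  assumes scaleC_add_right: "c *\<^sub>C (x + y) = c *\<^sub>C x + c *\<^sub>C y"
    and scaleC_add_left: "(c + d) *\<^sub>C x = c *\<^sub>C x + d *\<^sub>C x"
    and scaleC_scaleC: "c *\<^sub>C (d *\<^sub>C x) = (c * d) *\<^sub>C x"
    and scaleC_one: "1 *\<^sub>C x = x"
    and mult_scaleC_left: "(c *\<^sub>C x) * y = c *\<^sub>C (x * y)"
    and mult_scaleC_right: "x * (c *\<^sub>C y) = c *\<^sub>C (x * y)"

definition ncps :: "('a::complex_algebra_1 \<Rightarrow> complex) \<Rightarrow> bool" where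
  "ncps \<phi> \<longleftrightarrow> (\<forall>x y. \<phi> (x + y) = \<phi> x + \<phi> y) \<and> (\<forall>c x. \<phi> (c *\<^sub>C x) = c * \<phi> x)
      \<and> \<phi> 1 = 1"

definition alg_embedding :: "('a::complex_algebra_1 \<Rightarrow> 'b::complex_algebra_1) \<Rightarrow> bool" where
  "alg_embedding f \<longleftrightarrow> inj f \<and> f 1 = 1 \<and> (\<forall>x y. f (x + y) = f x + f y)
      \<and> (\<forall>x y. f (x * y) = f x * f y) \<and> (\<forall>c x. f (c *\<^sub>C x) = c *\<^sub>C f x)"

text \<open>Exchangeability system (U, phi~, (iota_k)) for (A, phi); indices range over nat.
  A mixed word X_1^(i_1)...X_n^(i_n) is given as a list of pairs (X_l, i_l).\<close>
definition exchangeability_system ::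
  "('a::complex_algebra_1 \<Rightarrow> complex) \<Rightarrow> ('u::complex_algebra_1 \<Rightarrow> complex) \<Rightarrow> (nat \<Rightarrow> 'a \<Rightarrow> 'u) \<Rightarrow> bool" where
  "exchangeability_system \<phi> \<phi>t \<iota> \<longleftrightarrow>
     ncps \<phi> \<and> ncps \<phi>t \<and> (\<forall>k. alg_embedding (\<iota> k)) \<and> (\<forall>k. \<phi>t \<circ> \<iota> k = \<phi>) \<and>
     (\<forall>(ws :: ('a \<times> nat) list) \<sigma>. bij \<sigma> \<longrightarrow>
        \<phi>t (prod_list (map (\<lambda>(x, i). \<iota> i x) ws)) =
        \<phi>t (prod_list (map (\<lambda>(x, i). \<iota> (\<sigma> i) x) ws)))"

definition primitive_root_of_unity :: "nat \<Rightarrow> complex \<Rightarrow> bool" where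
  "primitive_root_of_unity n \<omega> \<longleftrightarrow> n > 0 \<and> \<omega> ^ n = 1 \<and> (\<forall>k. 0 < k \<and> k < n \<longrightarrow> \<omega> ^ k \<noteq> 1)"

end

theory Submission
  imports Defs
begin

lemma ncps_zero: assumes "ncps \<phi>" shows "\<phi> 0 = 0"
proof -
  have "\<phi> (0 + 0) = \<phi> 0 + \<phi> 0" using assms unfolding ncps_def by blast
  then show ?thesis by simp
qed

lemma ncps_sum: assumes "ncps \<phi>" shows "\<phi> (sum f A) = (\<Sum>a\<in>A. \<phi> (f a))"
proof (cases "finite A")
  case True then show ?thesis
    by (induction A rule: finite_induct) (use assms in \<open>auto simp: ncps_zero ncps_def\<close>)
next
  case False then show ?thesis using ncps_zero[OF assms] by simp
qed

definition word :: "(nat \<Rightarrow> 'a \<Rightarrow> 'u::complex_algebra_1) \<Rightarrow> 'a list \<Rightarrow> nat list \<Rightarrow> 'u" where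
  "word \<iota> xs ks = prod_list (map (\<lambda>(x, i). \<iota> i x) (zip xs ks))"

definition TT :: "nat \<Rightarrow> nat \<Rightarrow> nat list set" where
  "TT n l = {ks. length ks = l \<and> set ks \<subseteq> {1..n}}"

lemma TT_finite: "finite (TT n l)"
proof -
  have "TT n l \<subseteq> {ks. set ks \<subseteq> {1..n} \<and> length ks = l}" by (auto simp: TT_def)
  then show ?thesis using finite_lists_length_eq[of "{1..n}" l] finite_subset by auto
qed

lemma TT_Suc: "bij_betw (\<lambda>(k, ks). k # ks) ({1..n} \<times> TT n l) (TT n (Suc l))"
  unfolding bij_betw_def
proof
  show "inj_on (\<lambda>(k, ks). k # ks) ({1..n} \<times> TT n l)" by (auto simp: inj_on_def)
  show "(\<lambda>(k, ks). k # ks) ` ({1..n} \<times> TT n l) = TT n (Suc l)"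
  proof
    show "(\<lambda>(k, ks). k # ks) ` ({1..n} \<times> TT n l) \<subseteq> TT n (Suc l)" by (auto simp: TT_def)
    show "TT n (Suc l) \<subseteq> (\<lambda>(k, ks). k # ks) ` ({1..n} \<times> TT n l)"
    proof
      fix ks assume "ks \<in> TT n (Suc l)"
      then obtain k r where "ks = k # r" "k \<in> {1..n}" "r \<in> TT n l"
        by (cases ks) (auto simp: TT_def)
      then show "ks \<in> (\<lambda>(k, ks). k # ks) ` ({1..n} \<times> TT n l)" by force
    qed
  qed
qed

lemma scaleC_mult2: "((c::complex) *\<^sub>C (a::'u::complex_algebra_1)) * (d *\<^sub>C b) = (c * d) *\<^sub>C (a * b)"
  by (simp add: mult_scaleC_left mult_scaleC_right scaleC_scaleC mult.commute)

lemma expand: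
  fixes \<iota> :: "nat \<Rightarrow> 'a \<Rightarrow> 'u::complex_algebra_1"
  shows "prod_list (map (\<lambda>x. \<Sum>k=1..n. (\<omega> ^ k) *\<^sub>C \<iota> k x) xs)
    = (\<Sum>ks\<in>TT n (length xs). (\<omega> ^ sum_list ks) *\<^sub>C word \<iota> xs ks)"
proof (induction xs)
  case Nil
  have "TT n 0 = {[]}" by (auto simp: TT_def)
  then show ?case by (simp add: word_def scaleC_one)
next
  case (Cons x xs)
  let ?l = "length xs"
  have "prod_list (map (\<lambda>x. \<Sum>k=1..n. (\<omega> ^ k) *\<^sub>C \<iota> k x) (x # xs))
     = (\<Sum>k=1..n. (\<omega> ^ k) *\<^sub>C \<iota> k x) * (\<Sum>ks\<in>TT n ?l. (\<omega> ^ sum_list ks) *\<^sub>C word \<iota> xs ks)"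
    using Cons by simp
  also have "\<dots> = (\<Sum>k\<in>{1..n}. \<Sum>ks\<in>TT n ?l. ((\<omega> ^ k) *\<^sub>C \<iota> k x) * ((\<omega> ^ sum_list ks) *\<^sub>C word \<iota> xs ks))"
    by (subst sum_distrib_right) (simp add: sum_distrib_left)
  also have "\<dots> = (\<Sum>(k, ks)\<in>{1..n} \<times> TT n ?l. (\<omega> ^ sum_list (k # ks)) *\<^sub>C word \<iota> (x # xs) (k # ks))"
    by (simp add: sum.cartesian_product scaleC_mult2 word_def power_add)
  also have "\<dots> = (\<Sum>ks\<in>TT n (Suc ?l). (\<omega> ^ sum_list ks) *\<^sub>C word \<iota> (x # xs) ks)"
    using sum.reindex_bij_betw[OF TT_Suc[of n ?l], of "\<lambda>ks. (\<omega> ^ sum_list ks) *\<^sub>C word \<iota> (x # xs) ks"]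
    by (simp add: case_prod_unfold)
  finally show ?case by simp
qed

lemma general:
  fixes \<phi> :: "'a::complex_algebra_1 \<Rightarrow> complex"
    and \<phi>t :: "'u::complex_algebra_1 \<Rightarrow> complex"
    and \<iota> :: "nat \<Rightarrow> 'a \<Rightarrow> 'u"
  assumes ex: "exchangeability_system \<phi> \<phi>t \<iota>"
    and pr: "primitive_root_of_unity n \<omega>"
    and m: "0 < length xs" "length xs < n"
  shows "\<phi>t (prod_list (map (\<lambda>x. \<Sum>k=1..n. (\<omega> ^ k) *\<^sub>C \<iota> k x) xs)) = 0"
proof -
  let ?m = "length xs"
  have n0: "n > 0" and wn: "\<omega> ^ n = 1" and wm: "\<omega> ^ ?m \<noteq> 1"
    using pr m by (auto simp: primitive_root_of_unity_def)
  have nc: "ncps \<phi>t" using ex by (simp add: exchangeability_system_def)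
  define \<sigma> where "\<sigma> k = (if 1 \<le> k \<and> k < n then k + 1 else if k = n then 1 else k)" for k
  define \<tau> where "\<tau> k = (if 2 \<le> k \<and> k \<le> n then k - 1 else if k = 1 then n else k)" for k
  have st: "\<sigma> (\<tau> k) = k" for k using n0 by (auto simp: \<sigma>_def \<tau>_def)
  have ts: "\<tau> (\<sigma> k) = k" for k using n0 by (auto simp: \<sigma>_def \<tau>_def)
  have bij: "bij \<sigma>" by (rule o_bij[of \<tau>]) (auto simp: st ts fun_eq_iff)
  define F where "F ks = \<phi>t (word \<iota> xs ks)" for ks
  have Fs: "F (map \<sigma> ks) = F ks" for ks
  proof -
    have "map (\<lambda>(x, i). \<iota> i x) (zip xs (map \<sigma> ks)) = map (\<lambda>(x, i). \<iota> (\<sigma> i) x) (zip xs ks)"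
      by (simp add: zip_map2 case_prod_unfold)
    then show ?thesis using ex bij unfolding F_def word_def exchangeability_system_def by metis
  qed
  have sig_in: "\<sigma> k \<in> {1..n}" if "k \<in> {1..n}" for k using that by (auto simp: \<sigma>_def)
  have tau_in: "\<tau> k \<in> {1..n}" if "k \<in> {1..n}" for k using that by (auto simp: \<tau>_def)
  have wsig: "\<omega> ^ sum_list (map \<sigma> ks) = \<omega> ^ length ks * \<omega> ^ sum_list ks" if "set ks \<subseteq> {1..n}" for ks
    using that
  proof (induction ks)
    case Nil then show ?case by simp
  next
    case (Cons k ks)
    have "\<omega> ^ \<sigma> k = \<omega> * \<omega> ^ k"
    proof (cases "k = n")
      case True then show ?thesis using wn by (simp add: \<sigma>_def)
    next
      case False then show ?thesis using Cons.prems by (simp add: \<sigma>_def)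
    qed
    then show ?case using Cons by (simp add: power_add)
  qed
  define S where "S = (\<Sum>ks\<in>TT n ?m. \<omega> ^ sum_list ks * F ks)"
  have S0: "\<phi>t (prod_list (map (\<lambda>x. \<Sum>k=1..n. (\<omega> ^ k) *\<^sub>C \<iota> k x) xs)) = S"
    unfolding expand S_def ncps_sum[OF nc] F_def using nc by (simp add: ncps_def)
  moreover have S1: "S = (\<Sum>ks\<in>TT n ?m. \<omega> ^ sum_list (map \<sigma> ks) * F (map \<sigma> ks))"
    unfolding S_def
  proof (rule sum.reindex_bij_witness[where i="map \<sigma>" and j="map \<tau>"])
    fix a assume "a \<in> TT n ?m"
    then show "map \<sigma> (map \<tau> a) = a" "map \<tau> a \<in> TT n ?m"
      using tau_in by (auto simp: TT_def st comp_def)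
  next
    fix a assume "a \<in> TT n ?m"
    then show "map \<tau> (map \<sigma> a) = a" "map \<sigma> a \<in> TT n ?m"
      using sig_in by (auto simp: TT_def ts comp_def)
    next
    fix a show "\<omega> ^ sum_list (map \<sigma> (map \<tau> a)) * F (map \<sigma> (map \<tau> a)) = \<omega> ^ sum_list a * F a"
      by (simp add: comp_def st)
  qed
  have S2: "(\<Sum>ks\<in>TT n ?m. \<omega> ^ sum_list (map \<sigma> ks) * F (map \<sigma> ks)) = \<omega> ^ ?m * S"
    unfolding S_def sum_distrib_left
    by (rule sum.cong) (auto simp: TT_def wsig Fs)
  have "S = \<omega> ^ ?m * S" using S1 S2 by (rule trans)
  then have "S = 0" using wm by (metis mult_cancel_right2)
  then show ?thesis using S0 by simp
qed

theorem lemma2p4: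
  fixes \<phi> :: "'a::complex_algebra_1 \<Rightarrow> complex"
    and \<phi>t :: "'u::complex_algebra_1 \<Rightarrow> complex"
    and \<iota> :: "nat \<Rightarrow> 'a \<Rightarrow> 'u"
    and X :: "nat \<Rightarrow> 'a" and n m :: nat and \<omega> :: complex and j :: "nat \<Rightarrow> nat"
  assumes "exchangeability_system \<phi> \<phi>t \<iota>"
    and "primitive_root_of_unity n \<omega>"
    and "1 \<le> m" and "m < n"
    and "\<forall>i\<in>{1..m}. 1 \<le> j i \<and> j i \<le> n"
    and "\<forall>i\<in>{1..<m}. j i < j (Suc i)"
  shows "\<phi>t (prod_list (map (\<lambda>i. \<Sum>k=1..n. (\<omega> ^ k) *\<^sub>C \<iota> k (X (j i))) [1..<m+1])) = 0"
proof -
  have "map (\<lambda>i. \<Sum>k=1..n. (\<omega> ^ k) *\<^sub>C \<iota> k (X (j i))) [1..<m+1]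
      = map (\<lambda>x. \<Sum>k=1..n. (\<omega> ^ k) *\<^sub>C \<iota> k x) (map (\<lambda>i. X (j i)) [1..<m+1])" by simp
  moreover have "\<phi>t (prod_list (map (\<lambda>x. \<Sum>k=1..n. (\<omega> ^ k) *\<^sub>C \<iota> k x) (map (\<lambda>i. X (j i)) [1..<m+1]))) = 0"
    by (rule general[OF assms(1,2)]) (use assms(3,4) in simp_all)
  ultimately show ?thesis by metis
qed

end
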